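(* There is an isomorphism of $\mathbb C$-vector spaces $\mathrm{Hom}_{\mathcal D}(\mathcal W,\mathbb C[[\lambda]])\cong\mathrm{Hom}_{\mathbb C}(\mathcal W_0,\mathbb C)$.
   Context: Let $A=\{\mathbf a_1,\dots,\mathbf a_m\}\subseteq\mathbb Z^n$ be linearly independent over $\mathbb R$, $\mathbf a_0\in\mathbb Z^n$, and $\ell_0,\dots,\ell_m$ positive integers with gcd $1$, $\ell_0\mathbf a_0=\sum_{j=1}^m\ell_j\mathbf a_j$, $\ell_0=\sum_{j=1}^m\ell_j$. Let $f_\lambda=\sum_{j=1}^m\ell_jx^{\mathbf a_j}-\ell_0\lambda x^{\mathbf a_0}$ and $f_0=\sum_{j=1}^m\ell_jx^{\mathbf a_j}$. Let $V$ be the real span of $A$, $V_{\mathbb Z}=V\cap\mathbb Z^n$, $C(A)$ the real cone generated by $A$, $M=V_{\mathbb Z}\cap C(A)$. Let $S$ (resp. $S_0$) be the $\mathbb C[\lambda]$-span (resp. $\mathbb C$-span) of $\{x^u:u\in M\}$ in $\mathbb C[\lambda][x_1^{\pm1},\dots,x_n^{\pm1}]$. Let $D_i=x_i\partial/\partial x_i+x_i\partial f_\lambda/\partial x_i$ on $S$, $D_{i,0}=x_i\partial/\partial x_i+x_i\partial f_0/\partial x_i$ on $S_0$ ($i=1,\dots,n$), and $D_\lambda=\partial/\partial\lambda-\ell_0x^{\mathbf a_0}$ on $S$. Let $\mathcal D=\mathbb C[\lambda]\langle\partial_\lambda\rangle$; $\mathcal W=S/\sum_iD_iS$ is a left $\mathcal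 D$-module with $\partial_\lambda$ acting as $D_\lambda$, and $\mathbb C[[\lambda]]$ is a left $\mathcal D$-module via $d/d\lambda$. Let $\mathcal W_0=S_0/\sum_iD_{i,0}S_0$. *)

theory Defs
  imports Main "HOL-Computational_Algebra.Polynomial" "HOL-Computational_Algebra.Polynomial_FPS"
begin

text \<open>Exponent vectors in Z^n are functions 'n => int with 'n a finite type (n = CARD('n)).
  The data A = {a 1, ..., a m}, a 0 and l 0, ..., l m are given as families indexed by nat.
  A Laurent polynomial is represented by its coefficient function (finite support).\<close>

definition lattice_cone :: "(nat \<Rightarrow> 'n::finite \<Rightarrow> int) \<Rightarrow> nat \<Rightarrow> ('n \<Rightarrow> int) set" where
  "lattice_cone a m = {u. \<exists>c::nat \<Rightarrow> real. (\<forall>j\<in>{1..m}. c j \<ge> 0) \<and>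
      (\<forall>i. real_of_int (u i) = (\<Sum>j=1..m. c j * real_of_int (a j i)))}"

definition S_space :: "(nat \<Rightarrow> 'n::finite \<Rightarrow> int) \<Rightarrow> nat \<Rightarrow> (('n \<Rightarrow> int) \<Rightarrow> complex poly) set" where
  "S_space a m = {g. finite {u. g u \<noteq> 0} \<and> {u. g u \<noteq> 0} \<subseteq> lattice_cone a m}"

definition S0_space :: "(nat \<Rightarrow> 'n::finite \<Rightarrow> int) \<Rightarrow> nat \<Rightarrow> (('n \<Rightarrow> int) \<Rightarrow> complex) set" where
  "S0_space a m = {g. finite {u. g u \<noteq> 0} \<and> {u. g u \<noteq> 0} \<subseteq> lattice_cone a m}"

text \<open>D_i = x_i d/dx_i + x_i (d f_lambda / d x_i), with
  f_lambda = sum_{j=1..m} l_j x^{a_j} - l_0 lambda x^{a_0}.\<close>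
definition D_op :: "(nat \<Rightarrow> 'n::finite \<Rightarrow> int) \<Rightarrow> (nat \<Rightarrow> nat) \<Rightarrow> nat \<Rightarrow> 'n
    \<Rightarrow> (('n \<Rightarrow> int) \<Rightarrow> complex poly) \<Rightarrow> (('n \<Rightarrow> int) \<Rightarrow> complex poly)" where
  "D_op a l m i g = (\<lambda>u. of_int (u i) * g u
      + (\<Sum>j=1..m. of_nat (l j) * of_int (a j i) * g (\<lambda>k. u k - a j k))
      - of_nat (l 0) * of_int (a 0 i) * [:0, 1:] * g (\<lambda>k. u k - a 0 k))"

text \<open>D_{i,0} = x_i d/dx_i + x_i (d f_0 / d x_i), f_0 = sum_{j=1..m} l_j x^{a_j}.\<close>
definition D0_op :: "(nat \<Rightarrow> 'n::finite \<Rightarrow> int) \<Rightarrow> (nat \<Rightarrow> nat) \<Rightarrow> nat \<Rightarrow> 'n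
    \<Rightarrow> (('n \<Rightarrow> int) \<Rightarrow> complex) \<Rightarrow> (('n \<Rightarrow> int) \<Rightarrow> complex)" where
  "D0_op a l m i g = (\<lambda>u. of_int (u i) * g u
      + (\<Sum>j=1..m. of_nat (l j) * of_int (a j i) * g (\<lambda>k. u k - a j k)))"

text \<open>D_lambda = d/dlambda - l_0 x^{a_0}.\<close>
definition Dlam_op :: "(nat \<Rightarrow> 'n::finite \<Rightarrow> int) \<Rightarrow> (nat \<Rightarrow> nat)
    \<Rightarrow> (('n \<Rightarrow> int) \<Rightarrow> complex poly) \<Rightarrow> (('n \<Rightarrow> int) \<Rightarrow> complex poly)" where
  "Dlam_op a l g = (\<lambda>u. pderiv (g u) - of_nat (l 0) * g (\<lambda>k. u k - a 0 k))"

text \<open>Hom_D(W, C[[lambda]]), W = S / sum_i D_i S: represented (universal property of the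
  quotient) as the C[lambda]-linear maps S -> C[[lambda]] vanishing on every D_i S and
  intertwining D_lambda with d/dlambda; normalised to be 0 outside S.\<close>
definition HomD :: "(nat \<Rightarrow> 'n::finite \<Rightarrow> int) \<Rightarrow> (nat \<Rightarrow> nat) \<Rightarrow> nat
    \<Rightarrow> ((('n \<Rightarrow> int) \<Rightarrow> complex poly) \<Rightarrow> complex fps) set" where
  "HomD a l m = {\<phi>.
      (\<forall>g. g \<notin> S_space a m \<longrightarrow> \<phi> g = 0) \<and>
      (\<forall>g\<in>S_space a m. \<forall>h\<in>S_space a m. \<phi> (\<lambda>u. g u + h u) = \<phi> g + \<phi> h) \<and>
      (\<forall>p. \<forall>g\<in>S_space a m. \<phi> (\<lambda>u. p * g u) = fps_of_poly p * \<phi> g) \<and>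
      (\<forall>i. \<forall>g\<in>S_space a m. \<phi> (D_op a l m i g) = 0) \<and>
      (\<forall>g\<in>S_space a m. \<phi> (Dlam_op a l g) = fps_deriv (\<phi> g))}"

text \<open>Hom_C(W_0, C), W_0 = S_0 / sum_i D_{i,0} S_0: C-linear maps S_0 -> C vanishing on
  every D_{i,0} S_0; normalised to be 0 outside S_0.\<close>
definition HomC0 :: "(nat \<Rightarrow> 'n::finite \<Rightarrow> int) \<Rightarrow> (nat \<Rightarrow> nat) \<Rightarrow> nat
    \<Rightarrow> ((('n \<Rightarrow> int) \<Rightarrow> complex) \<Rightarrow> complex) set" where
  "HomC0 a l m = {\<psi>.
      (\<forall>g. g \<notin> S0_space a m \<longrightarrow> \<psi> g = 0) \<and>
      (\<forall>g\<in>S0_space a m. \<forall>h\<in>S0_space a m. \<psi> (\<lambda>u. g u + h u) = \<psi> g + \<psi> h) \<and>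
      (\<forall>c. \<forall>g\<in>S0_space a m. \<psi> (\<lambda>u. c * g u) = c * \<psi> g) \<and>
      (\<forall>i. \<forall>g\<in>S0_space a m. \<psi> (D0_op a l m i g) = 0)}"

end

theory Submission
  imports Defs
begin


lemma cone_shift_j:
  assumes "u \<in> lattice_cone a m" "j0 \<in> {1..m}"
  shows "(\<lambda>k. u k + a j0 k) \<in> lattice_cone a m"
proof -
  obtain c where c: "\<forall>j\<in>{1..m}. c j \<ge> 0" "\<forall>i. real_of_int (u i) = (\<Sum>j=1..m. c j * real_of_int (a j i))"
    using assms(1) unfolding lattice_cone_def by blast
  define c' where "c' = (\<lambda>j. c j + (if j = j0 then 1 else 0))"
  have "\<forall>j\<in>{1..m}. c' j \<ge> 0" using c(1) by (simp add: c'_def)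
  moreover have "\<forall>i. real_of_int (u i + a j0 i) = (\<Sum>j=1..m. c' j * real_of_int (a j i))"
  proof
    fix i
    have "(\<Sum>j=1..m. c' j * real_of_int (a j i)) = (\<Sum>j=1..m. c j * real_of_int (a j i))
        + (\<Sum>j=1..m. (if j = j0 then real_of_int (a j i) else 0))"
      unfolding sum.distrib[symmetric] by (rule sum.cong) (auto simp: c'_def distrib_right)
    also have "\<dots> = real_of_int (u i) + real_of_int (a j0 i)"
      using c(2) assms(2) by (simp add: sum.delta)
    finally show "real_of_int (u i + a j0 i) = (\<Sum>j=1..m. c' j * real_of_int (a j i))" by simp
  qed
  ultimately show ?thesis unfolding lattice_cone_def by blast
qed

lemma cone_shift_0:
  assumes "u \<in> lattice_cone a m" "0 < l 0" "\<forall>i. int (l 0) * a 0 i = (\<Sum>j=1..m. int (l j) * a j i)"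
  shows "(\<lambda>k. u k + a 0 k) \<in> lattice_cone a m"
proof -
  obtain c where c: "\<forall>j\<in>{1..m}. c j \<ge> 0" "\<forall>i. real_of_int (u i) = (\<Sum>j=1..m. c j * real_of_int (a j i))"
    using assms(1) unfolding lattice_cone_def by blast
  define c' where "c' = (\<lambda>j. c j + real (l j) / real (l 0))"
  have "\<forall>j\<in>{1..m}. c' j \<ge> 0" using c(1) by (simp add: c'_def)
  moreover have "\<forall>i. real_of_int (u i + a 0 i) = (\<Sum>j=1..m. c' j * real_of_int (a j i))"
  proof
    fix i
    have e: "real (l 0) * real_of_int (a 0 i) = (\<Sum>j=1..m. real (l j) * real_of_int (a j i))"
      using arg_cong[OF assms(3)[rule_format, of i], of real_of_int] by (simp add: of_int_sum)
    have "(\<Sum>j=1..m. c' j * real_of_int (a j i)) = (\<Sum>j=1..m. c j * real_of_int (a j i))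
        + (\<Sum>j=1..m. real (l j) * real_of_int (a j i)) / real (l 0)"
      by (simp add: c'_def distrib_right sum.distrib sum_divide_distrib)
    also have "\<dots> = real_of_int (u i) + real_of_int (a 0 i)"
      using c(2) assms(2) e[symmetric] by simp
    finally show "real_of_int (u i + a 0 i) = (\<Sum>j=1..m. c' j * real_of_int (a j i))" by simp
  qed
  ultimately show ?thesis unfolding lattice_cone_def by blast
qed

lemma shift_supp:
  fixes g :: "('n::finite \<Rightarrow> int) \<Rightarrow> 'b::zero"
  assumes "finite {u. g u \<noteq> 0}" "{u. g u \<noteq> 0} \<subseteq> C"
    and "\<And>u. u \<in> C \<Longrightarrow> (\<lambda>k. u k + v k) \<in> C"
  shows "finite {u. g (\<lambda>k. u k - v k) \<noteq> 0} \<and> {u. g (\<lambda>k. u k - v k) \<noteq> 0} \<subseteq> C"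
proof -
  have sub: "{u. g (\<lambda>k. u k - v k) \<noteq> 0} \<subseteq> (\<lambda>w k. w k + v k) ` {u. g u \<noteq> 0}"
  proof
    fix u assume "u \<in> {u. g (\<lambda>k. u k - v k) \<noteq> 0}"
    then show "u \<in> (\<lambda>w k. w k + v k) ` {u. g u \<noteq> 0}"
      by (intro image_eqI[of _ _ "\<lambda>k. u k - v k"]) auto
  qed
  show ?thesis using finite_subset[OF sub] assms sub by blast
qed

lemma cone_closed:
  assumes "j \<in> {0..m}" "u \<in> lattice_cone a m" "0 < l 0" "\<forall>i. int (l 0) * a 0 i = (\<Sum>j=1..m. int (l j) * a j i)"
  shows "(\<lambda>k. u k + a j k) \<in> lattice_cone a m"
proof (cases "j = 0")
  case True then show ?thesis using assms cone_shift_0[of u a m l] by simp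
next
  case False then show ?thesis using assms cone_shift_j[of u a m j] by simp
qed

lemma S_shift:
  assumes "g \<in> S_space a m" "j \<in> {0..m}" "0 < l 0" "\<forall>i. int (l 0) * a 0 i = (\<Sum>j=1..m. int (l j) * a j i)"
  shows "finite {u. g (\<lambda>k. u k - a j k) \<noteq> 0} \<and> {u. g (\<lambda>k. u k - a j k) \<noteq> 0} \<subseteq> lattice_cone a m"
  using assms shift_supp[of g "lattice_cone a m" "a j"] cone_closed[of j m _ a l]
  unfolding S_space_def by blast

lemma S0_shift:
  assumes "g \<in> S0_space a m" "j \<in> {0..m}" "0 < l 0" "\<forall>i. int (l 0) * a 0 i = (\<Sum>j=1..m. int (l j) * a j i)"
  shows "finite {u. g (\<lambda>k. u k - a j k) \<noteq> 0} \<and> {u. g (\<lambda>k. u k - a j k) \<noteq> 0} \<subseteq> lattice_cone a m"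
  using assms shift_supp[of g "lattice_cone a m" "a j"] cone_closed[of j m _ a l]
  unfolding S0_space_def by blast



definition ev0 :: "(('n::finite \<Rightarrow> int) \<Rightarrow> complex poly) \<Rightarrow> ('n \<Rightarrow> int) \<Rightarrow> complex" where
  "ev0 g = (\<lambda>u. poly (g u) 0)"
definition lift0 :: "(('n::finite \<Rightarrow> int) \<Rightarrow> complex) \<Rightarrow> ('n \<Rightarrow> int) \<Rightarrow> complex poly" where
  "lift0 g = (\<lambda>u. [:g u:])"
definition tail0 :: "(('n::finite \<Rightarrow> int) \<Rightarrow> complex poly) \<Rightarrow> ('n \<Rightarrow> int) \<Rightarrow> complex poly" where
  "tail0 g = (\<lambda>u. synthetic_div (g u) 0)"

lemma S_I: "{u. h u \<noteq> 0} \<subseteq> A \<Longrightarrow> finite A \<Longrightarrow> A \<subseteq> lattice_cone a m \<Longrightarrow> h \<in> S_space a m"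
  unfolding S_space_def using finite_subset by blast
lemma S0_I: "{u. h u \<noteq> 0} \<subseteq> A \<Longrightarrow> finite A \<Longrightarrow> A \<subseteq> lattice_cone a m \<Longrightarrow> h \<in> S0_space a m"
  unfolding S0_space_def using finite_subset by blast

lemma S_add: "g \<in> S_space a m \<Longrightarrow> h \<in> S_space a m \<Longrightarrow> (\<lambda>u. g u + h u) \<in> S_space a m"
  by (rule S_I[of _ "{u. g u \<noteq> 0} \<union> {u. h u \<noteq> 0}"]) (auto simp: S_space_def)
lemma S0_add: "g \<in> S0_space a m \<Longrightarrow> h \<in> S0_space a m \<Longrightarrow> (\<lambda>u. g u + h u) \<in> S0_space a m"
  by (rule S0_I[of _ "{u. g u \<noteq> 0} \<union> {u. h u \<noteq> 0}"]) (auto simp: S0_space_def)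
lemma S_mult: "g \<in> S_space a m \<Longrightarrow> (\<lambda>u. p * g u) \<in> S_space a m"
  by (rule S_I[of _ "{u. g u \<noteq> 0}"]) (auto simp: S_space_def)
lemma S0_mult: "g \<in> S0_space a m \<Longrightarrow> (\<lambda>u. p * g u) \<in> S0_space a m"
  by (rule S0_I[of _ "{u. g u \<noteq> 0}"]) (auto simp: S0_space_def)
lemma S_zero: "(\<lambda>u. 0) \<in> S_space a m"
  by (simp add: S_space_def)
lemma S0_zero: "(\<lambda>u. 0) \<in> S0_space a m"
  by (simp add: S0_space_def)

lemma ev0_S: "g \<in> S_space a m \<Longrightarrow> ev0 g \<in> S0_space a m"
  by (rule S0_I[of _ "{u. g u \<noteq> 0}"]) (auto simp: S_space_def ev0_def)
lemma tail0_S: "g \<in> S_space a m \<Longrightarrow> tail0 g \<in> S_space a m"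
  by (rule S_I[of _ "{u. g u \<noteq> 0}"]) (auto simp: S_space_def tail0_def)
lemma lift0_S: "lift0 g \<in> S_space a m \<longleftrightarrow> g \<in> S0_space a m"
  by (simp add: S_space_def S0_space_def lift0_def)
lemma ev0_lift0[simp]: "ev0 (lift0 g) = g"
  by (simp add: ev0_def lift0_def)
lemma tail0_decomp: "g u = lift0 (ev0 g) u + [:0, 1:] * tail0 g u"
  using synthetic_div_correct'[of 0 "g u"] by (simp add: lift0_def ev0_def tail0_def add.commute)

lemma big_union_supp:
  assumes "g \<in> S_space a m" "0 < l 0" "\<forall>i. int (l 0) * a 0 i = (\<Sum>j=1..m. int (l j) * a j i)"
  shows "finite ({u. g u \<noteq> 0} \<union> (\<Union>j\<in>{0..m}. {u. g (\<lambda>k. u k - a j k) \<noteq> 0}))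
     \<and> ({u. g u \<noteq> 0} \<union> (\<Union>j\<in>{0..m}. {u. g (\<lambda>k. u k - a j k) \<noteq> 0})) \<subseteq> lattice_cone a m"
  using assms S_shift[OF assms(1) _ assms(2,3)] unfolding S_space_def by fastforce

lemma big_union_supp0:
  assumes "g \<in> S0_space a m" "0 < l 0" "\<forall>i. int (l 0) * a 0 i = (\<Sum>j=1..m. int (l j) * a j i)"
  shows "finite ({u. g u \<noteq> 0} \<union> (\<Union>j\<in>{0..m}. {u. g (\<lambda>k. u k - a j k) \<noteq> 0}))
     \<and> ({u. g u \<noteq> 0} \<union> (\<Union>j\<in>{0..m}. {u. g (\<lambda>k. u k - a j k) \<noteq> 0})) \<subseteq> lattice_cone a m"
  using assms S0_shift[OF assms(1) _ assms(2,3)] unfolding S0_space_def by fastforce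

lemma Dlam_S:
  assumes "g \<in> S_space a m" "0 < l 0" "\<forall>i. int (l 0) * a 0 i = (\<Sum>j=1..m. int (l j) * a j i)"
  shows "Dlam_op a l g \<in> S_space a m"
proof (rule S_I)
  show "{u. Dlam_op a l g u \<noteq> 0} \<subseteq> {u. g u \<noteq> 0} \<union> (\<Union>j\<in>{0..m}. {u. g (\<lambda>k. u k - a j k) \<noteq> 0})"
    by (auto simp: Dlam_op_def)
qed (use big_union_supp[OF assms] in auto)

lemma Dop_S:
  assumes "g \<in> S_space a m" "0 < l 0" "\<forall>i. int (l 0) * a 0 i = (\<Sum>j=1..m. int (l j) * a j i)"
  shows "D_op a l m i g \<in> S_space a m"
proof (rule S_I)
  show "{u. D_op a l m i g u \<noteq> 0} \<subseteq> {u. g u \<noteq> 0} \<union> (\<Union>j\<in>{0..m}. {u. g (\<lambda>k. u k - a j k) \<noteq> 0})"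
  proof
    fix u assume u: "u \<in> {u. D_op a l m i g u \<noteq> 0}"
    show "u \<in> {u. g u \<noteq> 0} \<union> (\<Union>j\<in>{0..m}. {u. g (\<lambda>k. u k - a j k) \<noteq> 0})"
    proof (rule ccontr)
      assume "\<not> ?thesis"
      then have z: "g u = 0" "\<And>j. j \<in> {0..m} \<Longrightarrow> g (\<lambda>k. u k - a j k) = 0" by auto
      have "D_op a l m i g u = 0" unfolding D_op_def using z by (simp add: sum.neutral)
      then show False using u by simp
    qed
  qed
qed (use big_union_supp[OF assms] in auto)



lemma pderiv_sum: "pderiv (\<Sum>j\<in>A. f j) = (\<Sum>j\<in>A. pderiv (f j))"
  by (induction A rule: infinite_finite_induct) (auto simp: pderiv_add)

lemma pderiv_of_int_mult[simp]: "pderiv (of_int z * p) = of_int z * pderiv (p :: complex poly)"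
  by (simp add: pderiv_mult of_int_poly pderiv_smult)
lemma pderiv_of_nat_mult[simp]: "pderiv (of_nat z * p) = of_nat z * pderiv (p :: complex poly)"
  by (simp add: pderiv_mult of_nat_poly pderiv_smult)
lemma pderiv_of_int_mult'[simp]: "pderiv (p * of_int z) = of_int z * pderiv (p :: complex poly)"
  by (simp add: pderiv_mult of_int_poly pderiv_smult)
lemma pderiv_of_nat_mult'[simp]: "pderiv (p * of_nat z) = of_nat z * pderiv (p :: complex poly)"
  by (simp add: pderiv_mult of_nat_poly pderiv_smult)
lemma pderiv_X_mult[simp]: "pderiv ([:0,1:] * p) = p + [:0,1:] * pderiv (p :: complex poly)"
  by (simp add: pderiv_mult pderiv_pCons)

lemma Dlam_comm: "Dlam_op a l (D_op a l m i g) = D_op a l m i (Dlam_op a l g)"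
proof (rule ext)
  fix u
  show "Dlam_op a l (D_op a l m i g) u = D_op a l m i (Dlam_op a l g) u"
    unfolding Dlam_op_def D_op_def
    by (simp add: pderiv_add pderiv_diff pderiv_sum pderiv_pCons mult.assoc sum_subtractf
         sum_distrib_left algebra_simps)
qed

lemma Dlam_add: "Dlam_op a l (\<lambda>u. g u + h u) = (\<lambda>u. Dlam_op a l g u + Dlam_op a l h u)"
  by (rule ext) (simp add: Dlam_op_def pderiv_add algebra_simps)

lemma Dlam_const: "Dlam_op a l (\<lambda>u. [:c:] * g u) = (\<lambda>u. [:c:] * Dlam_op a l g u)"
  by (rule ext) (simp add: Dlam_op_def pderiv_mult pderiv_smult algebra_simps)
lemma Dlam_smult: "Dlam_op a l (\<lambda>u. smult c (g u)) = (\<lambda>u. smult c (Dlam_op a l g u))"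
  by (rule ext) (simp add: Dlam_op_def pderiv_smult smult_diff_right)
lemma Dlam_pCons: "Dlam_op a l (\<lambda>u. pCons 0 (g u)) = (\<lambda>u. pCons 0 (Dlam_op a l g u) + g u)"
  by (rule ext) (simp add: Dlam_op_def pderiv_pCons algebra_simps)

lemma Dlam_X: "Dlam_op a l (\<lambda>u. [:0,1:] * g u) = (\<lambda>u. [:0,1:] * Dlam_op a l g u + g u)"
  by (rule ext) (simp add: Dlam_op_def pderiv_pCons algebra_simps)

lemma ev0_add: "ev0 (\<lambda>u. g u + h u) = (\<lambda>u. ev0 g u + ev0 h u)"
  by (simp add: ev0_def)
lemma ev0_const: "ev0 (\<lambda>u. [:c:] * g u) = (\<lambda>u. c * ev0 g u)"
  by (simp add: ev0_def)
lemma ev0_X: "ev0 (\<lambda>u. [:0,1:] * g u) = (\<lambda>u. 0)"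
  by (simp add: ev0_def)

lemma ev0_D: "ev0 (D_op a l m i g) = D0_op a l m i (ev0 g)"
  by (rule ext) (simp add: ev0_def D_op_def D0_op_def poly_sum)

definition DL :: "(nat \<Rightarrow> 'n::finite \<Rightarrow> int) \<Rightarrow> (nat \<Rightarrow> nat) \<Rightarrow> nat
   \<Rightarrow> (('n \<Rightarrow> int) \<Rightarrow> complex poly) \<Rightarrow> (('n \<Rightarrow> int) \<Rightarrow> complex poly)" where
  "DL a l k g = (Dlam_op a l ^^ k) g"

lemma DL_0[simp]: "DL a l 0 g = g" by (simp add: DL_def)
lemma DL_Suc: "DL a l (Suc k) g = Dlam_op a l (DL a l k g)" by (simp add: DL_def)
lemma DL_Suc': "DL a l (Suc k) g = DL a l k (Dlam_op a l g)" by (simp add: DL_def funpow_swap1)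

lemma DL_add: "DL a l k (\<lambda>u. g u + h u) = (\<lambda>u. DL a l k g u + DL a l k h u)"
  by (induction k) (simp_all add: DL_Suc Dlam_add)
lemma DL_const: "DL a l k (\<lambda>u. [:c:] * g u) = (\<lambda>u. [:c:] * DL a l k g u)"
  by (induction k) (simp_all add: DL_Suc Dlam_smult)
lemma DL_X: "DL a l (Suc k) (\<lambda>u. [:0,1:] * g u) = (\<lambda>u. [:0,1:] * DL a l (Suc k) g u + of_nat (Suc k) * DL a l k g u)"
proof (induction k)
  case 0
  then show ?case by (simp add: DL_Suc Dlam_pCons)
next
  case (Suc k)
  have "DL a l (Suc (Suc k)) (\<lambda>u. [:0,1:] * g u) = Dlam_op a l (\<lambda>u. [:0,1:] * DL a l (Suc k) g u + [:of_nat (Suc k):] * DL a l k g u)"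
    using Suc by (simp add: DL_Suc of_nat_poly)
  also have "\<dots> = (\<lambda>u. [:0,1:] * DL a l (Suc (Suc k)) g u + DL a l (Suc k) g u + [:of_nat (Suc k):] * DL a l (Suc k) g u)"
    by (simp add: Dlam_add Dlam_pCons Dlam_smult DL_Suc)
  also have "\<dots> = (\<lambda>u. [:0,1:] * DL a l (Suc (Suc k)) g u + of_nat (Suc (Suc k)) * DL a l (Suc k) g u)"
    by (rule ext) (simp add: of_nat_poly poly_eq_iff algebra_simps)
  finally show ?case .
qed
lemma DL_comm: "DL a l k (D_op a l m i g) = D_op a l m i (DL a l k g)"
  by (induction k) (simp_all add: DL_Suc Dlam_comm)
lemma DL_S:
  assumes "g \<in> S_space a m" "0 < l 0" "\<forall>i. int (l 0) * a 0 i = (\<Sum>j=1..m. int (l j) * a j i)"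
  shows "DL a l k g \<in> S_space a m"
  by (induction k) (simp_all add: DL_Suc Dlam_S assms)

lemma fps_deriv_iter_nth0: "fps_nth ((fps_deriv ^^ k) (f::complex fps)) 0 = fact k * fps_nth f k"
proof (induction k arbitrary: f)
  case 0 then show ?case by simp
next
  case (Suc k)
  have "fps_nth ((fps_deriv ^^ Suc k) f) 0 = fps_nth ((fps_deriv ^^ k) (fps_deriv f)) 0"
    by (simp only: funpow_Suc_right comp_apply)
  also have "\<dots> = fact k * (of_nat (k+1) * fps_nth f (k+1))" using Suc by simp
  finally have X: "fps_nth ((fps_deriv ^^ Suc k) f) 0 = fact k * (of_nat (k+1) * fps_nth f (k+1))" .
  show ?case unfolding X fact_Suc by (simp only: Suc_eq_plus1 mult.commute mult.left_commute mult.assoc)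
qed



definition Phi :: "((('n::finite \<Rightarrow> int) \<Rightarrow> complex poly) \<Rightarrow> complex fps) \<Rightarrow> (('n \<Rightarrow> int) \<Rightarrow> complex) \<Rightarrow> complex" where
  "Phi \<phi> = (\<lambda>g0. fps_nth (\<phi> (lift0 g0)) 0)"

definition Finv :: "(nat \<Rightarrow> 'n::finite \<Rightarrow> int) \<Rightarrow> (nat \<Rightarrow> nat) \<Rightarrow> nat \<Rightarrow> ((('n \<Rightarrow> int) \<Rightarrow> complex) \<Rightarrow> complex)
    \<Rightarrow> (('n \<Rightarrow> int) \<Rightarrow> complex poly) \<Rightarrow> complex fps" where
  "Finv a l m \<psi> = (\<lambda>g. if g \<in> S_space a m then Abs_fps (\<lambda>k. \<psi> (ev0 (DL a l k g)) / fact k) else 0)"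

lemma HomD_D:
  assumes "\<phi> \<in> HomD a l m"
  shows "\<And>g. g \<notin> S_space a m \<Longrightarrow> \<phi> g = 0"
    and "\<And>g h. g \<in> S_space a m \<Longrightarrow> h \<in> S_space a m \<Longrightarrow> \<phi> (\<lambda>u. g u + h u) = \<phi> g + \<phi> h"
    and "\<And>p g. g \<in> S_space a m \<Longrightarrow> \<phi> (\<lambda>u. p * g u) = fps_of_poly p * \<phi> g"
    and "\<And>i g. g \<in> S_space a m \<Longrightarrow> \<phi> (D_op a l m i g) = 0"
    and "\<And>g. g \<in> S_space a m \<Longrightarrow> \<phi> (Dlam_op a l g) = fps_deriv (\<phi> g)"
  using assms unfolding HomD_def by blast+

context
  fixes a :: "nat \<Rightarrow> 'n::finite \<Rightarrow> int" and l :: "nat \<Rightarrow> nat" and m :: nat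
  assumes l0pos: "0 < l 0"
    and a0rel: "\<forall>i. int (l 0) * a 0 i = (\<Sum>j=1..m. int (l j) * a j i)"
begin

lemma HomD_iter:
  assumes "\<phi> \<in> HomD a l m" "g \<in> S_space a m"
  shows "\<phi> (DL a l k g) = (fps_deriv ^^ k) (\<phi> g)"
proof (induction k)
  case 0 then show ?case by simp
next
  case (Suc k)
  have "DL a l k g \<in> S_space a m" using DL_S assms(2) l0pos a0rel by blast
  then show ?case using Suc HomD_D(5)[OF assms(1)] by (simp add: DL_Suc)
qed

lemma HomD_nth0:
  assumes "\<phi> \<in> HomD a l m" "h \<in> S_space a m"
  shows "fps_nth (\<phi> h) 0 = Phi \<phi> (ev0 h)"
proof -
  have h: "h = (\<lambda>u. lift0 (ev0 h) u + [:0,1:] * tail0 h u)"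
    using tail0_decomp[of h] by (intro ext) simp
  have s1: "lift0 (ev0 h) \<in> S_space a m" using lift0_S ev0_S assms(2) by blast
  have s2: "(\<lambda>u. [:0,1:] * tail0 h u) \<in> S_space a m" using S_mult tail0_S assms(2) by blast
  have t: "tail0 h \<in> S_space a m" using tail0_S assms(2) by blast
  have "\<phi> h = \<phi> (lift0 (ev0 h)) + \<phi> (\<lambda>u. [:0,1:] * tail0 h u)"
    using HomD_D(2)[OF assms(1) s1 s2] h by simp
  also have "\<phi> (\<lambda>u. [:0,1:] * tail0 h u) = fps_X * \<phi> (tail0 h)"
    by (subst HomD_D(3)[OF assms(1) t]) simp
  finally show ?thesis by (simp add: Phi_def)
qed

lemma HomD_expand:
  assumes "\<phi> \<in> HomD a l m" "g \<in> S_space a m"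
  shows "\<phi> g = Abs_fps (\<lambda>k. Phi \<phi> (ev0 (DL a l k g)) / fact k)"
proof (rule fps_ext)
  fix k
  have "fps_nth (\<phi> (DL a l k g)) 0 = fact k * fps_nth (\<phi> g) k"
    using HomD_iter[OF assms] fps_deriv_iter_nth0 by simp
  moreover have "fps_nth (\<phi> (DL a l k g)) 0 = Phi \<phi> (ev0 (DL a l k g))"
    using HomD_nth0 assms DL_S l0pos a0rel by blast
  ultimately show "fps_nth (\<phi> g) k = fps_nth (Abs_fps (\<lambda>k. Phi \<phi> (ev0 (DL a l k g)) / fact k)) k"
    by (simp add: field_simps)
qed

lemma Phi_HomC0:
  assumes "\<phi> \<in> HomD a l m"
  shows "Phi \<phi> \<in> HomC0 a l m"
  unfolding HomC0_def
proof (intro CollectI conjI allI ballI impI)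
  fix g assume "g \<notin> S0_space a m"
  then have "lift0 g \<notin> S_space a m" using lift0_S by blast
  then show "Phi \<phi> g = 0" using HomD_D(1)[OF assms] by (simp add: Phi_def)
next
  fix g h assume "g \<in> S0_space a m" "h \<in> S0_space a m"
  moreover have "lift0 (\<lambda>u. g u + h u) = (\<lambda>u. lift0 g u + lift0 h u)" by (simp add: lift0_def)
  moreover have "lift0 g \<in> S_space a m" "lift0 h \<in> S_space a m" using calculation lift0_S by blast+
  ultimately show "Phi \<phi> (\<lambda>u. g u + h u) = Phi \<phi> g + Phi \<phi> h"
    using HomD_D(2)[OF assms] by (simp add: Phi_def)
next
  fix c g assume "g \<in> S0_space a m"
  moreover have "lift0 (\<lambda>u. c * g u) = (\<lambda>u. [:c:] * lift0 g u)" by (simp add: lift0_def mult.commute)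
  moreover have "lift0 g \<in> S_space a m" using calculation lift0_S by blast
  ultimately show "Phi \<phi> (\<lambda>u. c * g u) = c * Phi \<phi> g"
    unfolding Phi_def by (simp only: HomD_D(3)[OF assms] fps_of_poly_const) simp
next
  fix i g assume g: "g \<in> S0_space a m"
  have s: "D_op a l m i (lift0 g) \<in> S_space a m" using Dop_S lift0_S g l0pos a0rel by blast
  have "Phi \<phi> (D0_op a l m i g) = Phi \<phi> (ev0 (D_op a l m i (lift0 g)))" by (simp add: ev0_D)
  also have "\<dots> = fps_nth (\<phi> (D_op a l m i (lift0 g))) 0" using HomD_nth0[OF assms s] by simp
  also have "\<dots> = 0"
  proof -
    have "lift0 g \<in> S_space a m" using g lift0_S by blast
    then have "\<phi> (D_op a l m i (lift0 g)) = 0" using HomD_D(4)[OF assms] by blast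
    then show ?thesis by simp
  qed
  finally show "Phi \<phi> (D0_op a l m i g) = 0" .
qed

end



lemma HomC0_D:
  assumes "\<psi> \<in> HomC0 a l m"
  shows "\<And>g. g \<notin> S0_space a m \<Longrightarrow> \<psi> g = 0"
    and "\<And>g h. g \<in> S0_space a m \<Longrightarrow> h \<in> S0_space a m \<Longrightarrow> \<psi> (\<lambda>u. g u + h u) = \<psi> g + \<psi> h"
    and "\<And>c g. g \<in> S0_space a m \<Longrightarrow> \<psi> (\<lambda>u. c * g u) = c * \<psi> g"
    and "\<And>i g. g \<in> S0_space a m \<Longrightarrow> \<psi> (D0_op a l m i g) = 0"
  using assms unfolding HomC0_def by blast+

lemma HomC0_zero:
  assumes "\<psi> \<in> HomC0 a l m"
  shows "\<psi> (\<lambda>u. 0) = 0"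
  using HomC0_D(3)[OF assms S0_zero, of 0] by simp

context
  fixes a :: "nat \<Rightarrow> 'n::finite \<Rightarrow> int" and l :: "nat \<Rightarrow> nat" and m :: nat
  assumes l0pos: "0 < l 0"
    and a0rel: "\<forall>i. int (l 0) * a 0 i = (\<Sum>j=1..m. int (l j) * a j i)"
begin

abbreviation "FF \<psi> g \<equiv> Abs_fps (\<lambda>k. \<psi> (ev0 (DL a l k g)) / fact k)"

lemma ev0DL_S: "g \<in> S_space a m \<Longrightarrow> ev0 (DL a l k g) \<in> S0_space a m"
  using ev0_S DL_S l0pos a0rel by blast

lemma FF_add:
  assumes "\<psi> \<in> HomC0 a l m" "g \<in> S_space a m" "h \<in> S_space a m"
  shows "FF \<psi> (\<lambda>u. g u + h u) = FF \<psi> g + FF \<psi> h"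
proof (rule fps_ext)
  fix k
  have "\<psi> (ev0 (DL a l k (\<lambda>u. g u + h u))) = \<psi> (ev0 (DL a l k g)) + \<psi> (ev0 (DL a l k h))"
    unfolding DL_add ev0_add using HomC0_D(2)[OF assms(1) ev0DL_S[OF assms(2)] ev0DL_S[OF assms(3)]] .
  then show "fps_nth (FF \<psi> (\<lambda>u. g u + h u)) k = fps_nth (FF \<psi> g + FF \<psi> h) k"
    by (simp add: add_divide_distrib)
qed

lemma FF_const:
  assumes "\<psi> \<in> HomC0 a l m" "g \<in> S_space a m"
  shows "FF \<psi> (\<lambda>u. [:c:] * g u) = fps_const c * FF \<psi> g"
proof (rule fps_ext)
  fix k
  have "\<psi> (ev0 (DL a l k (\<lambda>u. [:c:] * g u))) = c * \<psi> (ev0 (DL a l k g))"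
    unfolding DL_const ev0_const using HomC0_D(3)[OF assms(1) ev0DL_S[OF assms(2)]] .
  then show "fps_nth (FF \<psi> (\<lambda>u. [:c:] * g u)) k = fps_nth (fps_const c * FF \<psi> g) k"
    by simp
qed

lemma FF_X:
  assumes "\<psi> \<in> HomC0 a l m" "g \<in> S_space a m"
  shows "FF \<psi> (\<lambda>u. [:0,1:] * g u) = fps_X * FF \<psi> g"
proof (rule fps_ext)
  fix k
  show "fps_nth (FF \<psi> (\<lambda>u. [:0,1:] * g u)) k = fps_nth (fps_X * FF \<psi> g) k"
  proof (cases k)
    case 0
    have "ev0 (\<lambda>u. [:0,1:] * g u) = (\<lambda>u. 0)" by (rule ev0_X)
    then show ?thesis using 0 HomC0_zero[OF assms(1)] by simp
  next
    case (Suc j)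
    have e: "ev0 (DL a l (Suc j) (\<lambda>u. [:0,1:] * g u)) = (\<lambda>u. of_nat (Suc j) * ev0 (DL a l j g) u)"
      unfolding DL_X by (simp add: ev0_def)
    have "\<psi> (ev0 (DL a l (Suc j) (\<lambda>u. [:0,1:] * g u))) = of_nat (Suc j) * \<psi> (ev0 (DL a l j g))"
      unfolding e using HomC0_D(3)[OF assms(1) ev0DL_S[OF assms(2)]] .
    then show ?thesis using Suc by (simp add: field_simps del: of_nat_Suc)
  qed
qed

lemma FF_mult:
  assumes "\<psi> \<in> HomC0 a l m" "g \<in> S_space a m"
  shows "FF \<psi> (\<lambda>u. p * g u) = fps_of_poly p * FF \<psi> g"
proof (induction p rule: pCons_induct)
  case 0
  have "DL a l k (\<lambda>u. 0) = (\<lambda>u. 0)" for k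
    using DL_const[of a l k 0 g] by simp
  then show ?case using HomC0_zero[OF assms(1)] by (simp add: ev0_def fps_eq_iff)
next
  case (pCons c q)
  have s1: "(\<lambda>u. [:c:] * g u) \<in> S_space a m" "(\<lambda>u. q * g u) \<in> S_space a m"
    "(\<lambda>u. [:0,1:] * (q * g u)) \<in> S_space a m"
    using S_mult assms(2) by blast+
  have "(\<lambda>u. pCons c q * g u) = (\<lambda>u. [:c:] * g u + [:0,1:] * (q * g u))"
    by (rule ext) (simp add: algebra_simps)
  then have "FF \<psi> (\<lambda>u. pCons c q * g u) = FF \<psi> (\<lambda>u. [:c:] * g u) + FF \<psi> (\<lambda>u. [:0,1:] * (q * g u))"
    using FF_add[OF assms(1) s1(1) s1(3)] by simp
  also have "\<dots> = fps_const c * FF \<psi> g + fps_X * (fps_of_poly q * FF \<psi> g)"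
    using FF_const[OF assms] FF_X[OF assms(1) s1(2)] pCons.IH by simp
  also have "\<dots> = fps_of_poly (pCons c q) * FF \<psi> g"
    by (simp add: fps_of_poly_pCons algebra_simps)
  finally show ?case .
qed

end



context
  fixes a :: "nat \<Rightarrow> 'n::finite \<Rightarrow> int" and l :: "nat \<Rightarrow> nat" and m :: nat
  assumes l0pos: "0 < l 0"
    and a0rel: "\<forall>i. int (l 0) * a 0 i = (\<Sum>j=1..m. int (l j) * a j i)"
begin

lemma Finv_HomD:
  assumes "\<psi> \<in> HomC0 a l m"
  shows "Finv a l m \<psi> \<in> HomD a l m"
  unfolding HomD_def
proof (intro CollectI conjI allI ballI impI)
  fix g assume "g \<notin> S_space a m"
  then show "Finv a l m \<psi> g = 0" by (simp add: Finv_def)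
next
  fix g h assume gh: "g \<in> S_space a m" "h \<in> S_space a m"
  have "(\<lambda>u. g u + h u) \<in> S_space a m" using S_add[OF gh] .
  then show "Finv a l m \<psi> (\<lambda>u. g u + h u) = Finv a l m \<psi> g + Finv a l m \<psi> h"
    using FF_add[OF l0pos a0rel assms gh] gh by (simp add: Finv_def)
next
  fix p g assume g: "g \<in> S_space a m"
  have "(\<lambda>u. p * g u) \<in> S_space a m" using S_mult[OF g] .
  then show "Finv a l m \<psi> (\<lambda>u. p * g u) = fps_of_poly p * Finv a l m \<psi> g"
    using FF_mult[OF l0pos a0rel assms g] g by (simp add: Finv_def)
next
  fix i g assume g: "g \<in> S_space a m"
  have s: "D_op a l m i g \<in> S_space a m" using Dop_S g l0pos a0rel by blast
  have "\<psi> (ev0 (DL a l k (D_op a l m i g))) = 0" for k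
    unfolding DL_comm ev0_D using HomC0_D(4)[OF assms ev0DL_S[OF l0pos a0rel g]] .
  then show "Finv a l m \<psi> (D_op a l m i g) = 0"
    using s by (simp add: Finv_def fps_eq_iff)
next
  fix g assume g: "g \<in> S_space a m"
  have s: "Dlam_op a l g \<in> S_space a m" using Dlam_S g l0pos a0rel by blast
  show "Finv a l m \<psi> (Dlam_op a l g) = fps_deriv (Finv a l m \<psi> g)"
  proof (rule fps_ext)
    fix k
    have "fact (Suc k) = (of_nat (Suc k) :: complex) * fact k" by (rule fact_Suc)
    then show "fps_nth (Finv a l m \<psi> (Dlam_op a l g)) k = fps_nth (fps_deriv (Finv a l m \<psi> g)) k"
      using s g by (simp add: Finv_def DL_Suc'[symmetric] del: of_nat_Suc)
  qed
qed

lemma Phi_Finv: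
  assumes "\<psi> \<in> HomC0 a l m"
  shows "Phi (Finv a l m \<psi>) = \<psi>"
proof (rule ext)
  fix g0
  show "Phi (Finv a l m \<psi>) g0 = \<psi> g0"
  proof (cases "g0 \<in> S0_space a m")
    case True
    then have "lift0 g0 \<in> S_space a m" using lift0_S by blast
    then show ?thesis by (simp add: Phi_def Finv_def)
  next
    case False
    then have "lift0 g0 \<notin> S_space a m" using lift0_S by blast
    then show ?thesis using HomC0_D(1)[OF assms False] by (simp add: Phi_def Finv_def)
  qed
qed

end


theorem theorem2p1:
  fixes a :: "nat \<Rightarrow> 'n::finite \<Rightarrow> int" and l :: "nat \<Rightarrow> nat" and m :: nat
  assumes indep: "\<forall>c::nat \<Rightarrow> real.
             (\<forall>i. (\<Sum>j=1..m. c j * real_of_int (a j i)) = 0) \<longrightarrow> (\<forall>j\<in>{1..m}. c j = 0)"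
    and lpos: "\<forall>j\<in>{0..m}. 0 < l j"
    and lgcd: "Gcd (l ` {0..m}) = 1"
    and a0: "\<forall>i. int (l 0) * a 0 i = (\<Sum>j=1..m. int (l j) * a j i)"
    and l0: "l 0 = (\<Sum>j=1..m. l j)"
  shows "\<exists>\<Phi>. bij_betw \<Phi> (HomD a l m) (HomC0 a l m) \<and>
           (\<forall>\<phi>\<in>HomD a l m. \<forall>\<psi>\<in>HomD a l m.
              \<Phi> (\<lambda>g. \<phi> g + \<psi> g) = (\<lambda>g. \<Phi> \<phi> g + \<Phi> \<psi> g)) \<and>
           (\<forall>c. \<forall>\<phi>\<in>HomD a l m. \<Phi> (\<lambda>g. fps_const c * \<phi> g) = (\<lambda>g. c * \<Phi> \<phi> g))"
  proof -
  have l0pos: "0 < l 0" using lpos by auto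
  show ?thesis
  proof (intro exI[of _ Phi] conjI ballI allI)
    show "bij_betw Phi (HomD a l m) (HomC0 a l m)"
    proof (rule bij_betw_imageI)
      show "inj_on Phi (HomD a l m)"
      proof (rule inj_onI)
        fix \<phi>1 \<phi>2 assume h: "\<phi>1 \<in> HomD a l m" "\<phi>2 \<in> HomD a l m" "Phi \<phi>1 = Phi \<phi>2"
        show "\<phi>1 = \<phi>2"
        proof (rule ext)
          fix g show "\<phi>1 g = \<phi>2 g"
          proof (cases "g \<in> S_space a m")
            case True
            then show ?thesis using HomD_expand[OF l0pos a0 h(1) True] HomD_expand[OF l0pos a0 h(2) True] h(3)
              by simp
          next
            case False
            then show ?thesis using HomD_D(1)[OF h(1)] HomD_D(1)[OF h(2)] by simp
          qed
        qed
      qed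
      show "Phi ` HomD a l m = HomC0 a l m"
      proof
        show "Phi ` HomD a l m \<subseteq> HomC0 a l m" using Phi_HomC0[OF l0pos a0] by blast
        show "HomC0 a l m \<subseteq> Phi ` HomD a l m"
        proof
          fix \<psi> assume p: "\<psi> \<in> HomC0 a l m"
          show "\<psi> \<in> Phi ` HomD a l m"
            using Finv_HomD[OF l0pos a0 p] Phi_Finv[OF l0pos a0 p] by (metis image_eqI)
        qed
      qed
    qed
  next
    fix \<phi> \<psi> assume "\<phi> \<in> HomD a l m" "\<psi> \<in> HomD a l m"
    show "Phi (\<lambda>g. \<phi> g + \<psi> g) = (\<lambda>g. Phi \<phi> g + Phi \<psi> g)" by (simp add: Phi_def)
  next
    fix c and \<phi> assume "\<phi> \<in> HomD a l m"
    show "Phi (\<lambda>g. fps_const c * \<phi> g) = (\<lambda>g. c * Phi \<phi> g)" by (simp add: Phi_def)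
  qed
qed

end
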